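(* Let $\mathbb O=\{-m,\dots,0,\dots,M\}$ with integers $m,M\ge1$, and $\theta=0$. For every $x(0)\in\mathbb O^n$: if there exists a finite legal update sequence from $x(0)$ without crossing updates along which the trajectory reaches the consensus state $(0,\dots,0)$, then there exists a finite legal update sequence from $x(0)$ without crossing updates along which the system reaches a state $y$ (not necessarily an equilibrium) with $y_i=-1$ for every $i$ with $x_i(0)<0$ and $y_i=1$ for every $i$ with $x_i(0)>0$.
   Context: Let $n\ge1$, $\mathcal V=\{1,\dots,n\}$, and let $W=(w_{ij})$ be an $n\times n$ row-stochastic matrix. For $x\in\mathbb O^n$, $i\in\mathcal V$, $z\in\mathbb O$, define $C^i_{\mathrm{social}}(z;x)=\sum_{j=1}^n w_{ij}|z-x_j|$ and $P_i(x)=\{z\in\mathbb O: C^i_{\mathrm{social}}(z;x)\le C^i_{\mathrm{social}}(x_i;x),\ |z-\theta|\le |x_i-\theta|\}$. A legal update sequence from $x(0)$ is a finite sequence $(i_1,z_1),\dots,(i_T,z_T)$ with $i_t\in\mathcal V$, generating $x(1),\dots,x(T)$ where $x(t)$ is obtained from $x(t-1)$ by setting coordinate $i_t$ to $z_t$, such that $z_t\in P_{i_t}(x(t-1))$ for every $t$. The update at step $t$ is a crossing update if $(x_{i_t}(t)-\theta)(x_{i_t}(t-1)-\theta)<0$. *)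

theory Defs
  imports Complex_Main
begin

text \<open>Agents are the elements of a finite type 'n (playing the role of {1..n});
  opinions are integers; an update is a pair (agent, new opinion).\<close>

definition opinions :: "int \<Rightarrow> int \<Rightarrow> int set" where
  "opinions m M = {-m..M}"

definition row_stochastic :: "('n::finite \<Rightarrow> 'n \<Rightarrow> real) \<Rightarrow> bool" where
  "row_stochastic W \<longleftrightarrow> (\<forall>i j. W i j \<ge> 0) \<and> (\<forall>i. (\<Sum>j\<in>UNIV. W i j) = 1)"

definition C_social :: "('n::finite \<Rightarrow> 'n \<Rightarrow> real) \<Rightarrow> 'n \<Rightarrow> int \<Rightarrow> ('n \<Rightarrow> int) \<Rightarrow> real" where
  "C_social W i z x = (\<Sum>j\<in>UNIV. W i j * real_of_int \<bar>z - x j\<bar>)"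

definition P_set :: "int set \<Rightarrow> int \<Rightarrow> ('n::finite \<Rightarrow> 'n \<Rightarrow> real) \<Rightarrow> 'n \<Rightarrow> ('n \<Rightarrow> int) \<Rightarrow> int set" where
  "P_set O\<^sub>s \<theta> W i x = {z \<in> O\<^sub>s. C_social W i z x \<le> C_social W i (x i) x \<and> \<bar>z - \<theta>\<bar> \<le> \<bar>x i - \<theta>\<bar>}"

fun run :: "('n \<Rightarrow> int) \<Rightarrow> ('n \<times> int) list \<Rightarrow> ('n \<Rightarrow> int)" where
  "run x [] = x"
| "run x ((i, z) # s) = run (x(i := z)) s"

definition traj :: "('n \<Rightarrow> int) \<Rightarrow> ('n \<times> int) list \<Rightarrow> nat \<Rightarrow> ('n \<Rightarrow> int)" where
  "traj x s t = run x (take t s)"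

fun legal :: "int set \<Rightarrow> int \<Rightarrow> ('n::finite \<Rightarrow> 'n \<Rightarrow> real) \<Rightarrow> ('n \<Rightarrow> int) \<Rightarrow> ('n \<times> int) list \<Rightarrow> bool" where
  "legal O\<^sub>s \<theta> W x [] = True"
| "legal O\<^sub>s \<theta> W x ((i, z) # s) = (z \<in> P_set O\<^sub>s \<theta> W i x \<and> legal O\<^sub>s \<theta> W (x(i := z)) s)"

fun no_crossing :: "int \<Rightarrow> ('n \<Rightarrow> int) \<Rightarrow> ('n \<times> int) list \<Rightarrow> bool" where
  "no_crossing \<theta> x [] = True"
| "no_crossing \<theta> x ((i, z) # s) = (\<not> ((z - \<theta>) * (x i - \<theta>) < 0) \<and> no_crossing \<theta> (x(i := z)) s)"

end

theory Submission
  imports Defs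
begin

lemma core:
  fixes w a b :: "'n::finite \<Rightarrow> real" and v z :: real
  assumes w: "\<forall>j. w j \<ge> 0" and v: "v \<ge> 1" and z: "z = 0 \<or> (z \<ge> 1 \<and> z \<le> v)"
    and ab: "\<forall>j. b j = a j \<or> (a j = 0 \<and> (b j = 1 \<or> b j = -1))"
    and h: "(\<Sum>j\<in>UNIV. w j * \<bar>z - a j\<bar>) \<le> (\<Sum>j\<in>UNIV. w j * \<bar>v - a j\<bar>)"
  shows "(\<Sum>j\<in>UNIV. w j * \<bar>max z 1 - b j\<bar>) \<le> (\<Sum>j\<in>UNIV. w j * \<bar>v - b j\<bar>)"
proof -
  have shift: "\<bar>u - b j\<bar> - \<bar>u - a j\<bar> = \<bar>v - b j\<bar> - \<bar>v - a j\<bar>" if "u \<ge> 1" for u j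
    using ab[rule_format, of j] that v by auto
  show ?thesis
  proof (cases "z \<ge> 1")
    case True
    have "(\<Sum>j\<in>UNIV. w j * \<bar>z - b j\<bar>) - (\<Sum>j\<in>UNIV. w j * \<bar>v - b j\<bar>)
        = (\<Sum>j\<in>UNIV. w j * (\<bar>z - b j\<bar> - \<bar>v - b j\<bar>))"
      by (simp add: sum_subtractf[symmetric] algebra_simps)
    also have "\<dots> = (\<Sum>j\<in>UNIV. w j * (\<bar>z - a j\<bar> - \<bar>v - a j\<bar>))"
      by (rule sum.cong; simp; smt (verit) shift[OF True])
    also have "\<dots> = (\<Sum>j\<in>UNIV. w j * \<bar>z - a j\<bar>) - (\<Sum>j\<in>UNIV. w j * \<bar>v - a j\<bar>)"
      by (simp add: sum_subtractf[symmetric] algebra_simps)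
    finally show ?thesis using h True by simp
  next
    case False
    then have z0: "z = 0" using z by auto
    have "v * ((\<Sum>j\<in>UNIV. w j * \<bar>1 - b j\<bar>) - (\<Sum>j\<in>UNIV. w j * \<bar>v - b j\<bar>))
        = (\<Sum>j\<in>UNIV. v * (w j * (\<bar>1 - b j\<bar> - \<bar>v - b j\<bar>)))"
      by (simp add: sum_subtractf[symmetric] sum_distrib_left algebra_simps)
    also have "\<dots> = (\<Sum>j\<in>UNIV. v * (w j * (\<bar>1 - a j\<bar> - \<bar>v - a j\<bar>)))"
      by (rule sum.cong; simp; smt (verit) shift[of 1])
    also have "\<dots> \<le> (\<Sum>j\<in>UNIV. (v - 1) * (w j * (\<bar>0 - a j\<bar> - \<bar>v - a j\<bar>)))"
    proof (rule sum_mono)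
      fix j
      have t: "v * \<bar>1 - a j\<bar> \<le> (v - 1) * \<bar>a j\<bar> + \<bar>v - a j\<bar>"
      proof -
        have e: "(v - 1) * (- a j) + (v - a j) = v * (1 - a j)" by (simp add: algebra_simps)
        have "v * \<bar>1 - a j\<bar> = \<bar>(v - 1) * (- a j) + (v - a j)\<bar>" using v
          unfolding e by (simp add: abs_mult)
        also have "\<dots> \<le> \<bar>(v - 1) * (- a j)\<bar> + \<bar>v - a j\<bar>" by (rule abs_triangle_ineq)
        also have "\<bar>(v - 1) * (- a j)\<bar> = (v - 1) * \<bar>a j\<bar>" using v by (simp add: abs_mult)
        finally show ?thesis .
      qed
      have "v * (\<bar>1 - a j\<bar> - \<bar>v - a j\<bar>) \<le> (v - 1) * (\<bar>0 - a j\<bar> - \<bar>v - a j\<bar>)"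
        using t by (simp add: algebra_simps)
      then have "w j * (v * (\<bar>1 - a j\<bar> - \<bar>v - a j\<bar>)) \<le> w j * ((v - 1) * (\<bar>0 - a j\<bar> - \<bar>v - a j\<bar>))"
        using w by (simp add: mult_left_mono)
      then show "v * (w j * (\<bar>1 - a j\<bar> - \<bar>v - a j\<bar>)) \<le> (v - 1) * (w j * (\<bar>0 - a j\<bar> - \<bar>v - a j\<bar>))"
        by (simp add: algebra_simps)
    qed
    also have "\<dots> = (v - 1) * ((\<Sum>j\<in>UNIV. w j * \<bar>z - a j\<bar>) - (\<Sum>j\<in>UNIV. w j * \<bar>v - a j\<bar>))"
      using z0 by (simp add: sum_subtractf[symmetric] sum_distrib_left algebra_simps)
    also have "\<dots> \<le> 0" using h v by (simp add: mult_nonneg_nonpos)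
    finally have "v * ((\<Sum>j\<in>UNIV. w j * \<bar>1 - b j\<bar>) - (\<Sum>j\<in>UNIV. w j * \<bar>v - b j\<bar>)) \<le> 0" .
    then have "(\<Sum>j\<in>UNIV. w j * \<bar>1 - b j\<bar>) - (\<Sum>j\<in>UNIV. w j * \<bar>v - b j\<bar>) \<le> 0"
      using v by (simp add: mult_le_0_iff)
    then show ?thesis using z0 by simp
  qed
qed

lemma core_neg:
  fixes w a b :: "'n::finite \<Rightarrow> real" and v z :: real
  assumes w: "\<forall>j. w j \<ge> 0" and v: "v \<le> -1" and z: "z = 0 \<or> (z \<le> -1 \<and> v \<le> z)"
    and ab: "\<forall>j. b j = a j \<or> (a j = 0 \<and> (b j = 1 \<or> b j = -1))"
    and h: "(\<Sum>j\<in>UNIV. w j * \<bar>z - a j\<bar>) \<le> (\<Sum>j\<in>UNIV. w j * \<bar>v - a j\<bar>)"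
  shows "(\<Sum>j\<in>UNIV. w j * \<bar>min z (-1) - b j\<bar>) \<le> (\<Sum>j\<in>UNIV. w j * \<bar>v - b j\<bar>)"
proof -
  have ab': "\<forall>j. (- b j) = (- a j) \<or> ((- a j) = 0 \<and> ((- b j) = 1 \<or> (- b j) = -1))"
    using ab by force
  have e1: "\<bar>x - y\<bar> = \<bar>(- x) - (- y)\<bar>" for x y :: real by simp
  have h': "(\<Sum>j\<in>UNIV. w j * \<bar>(- z) - (- a j)\<bar>) \<le> (\<Sum>j\<in>UNIV. w j * \<bar>(- v) - (- a j)\<bar>)"
    using h by (simp only: e1[symmetric])
  have "(\<Sum>j\<in>UNIV. w j * \<bar>max (- z) 1 - (- b j)\<bar>) \<le> (\<Sum>j\<in>UNIV. w j * \<bar>(- v) - (- b j)\<bar>)"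
    by (rule core[OF w _ _ ab' h']) (use v z in auto)
  moreover have "max (- z) 1 = - min z (-1)" by auto
  ultimately show ?thesis by (simp only: e1[symmetric])
qed

definition sg :: "('n \<Rightarrow> int) \<Rightarrow> 'n \<Rightarrow> int \<Rightarrow> int" where
  "sg x0 i v = (if x0 i > 0 then max v 1 else if x0 i < 0 then min v (-1) else v)"

definition ok :: "('n \<Rightarrow> int) \<Rightarrow> ('n \<Rightarrow> int) \<Rightarrow> bool" where
  "ok x0 x = (\<forall>i. (x0 i > 0 \<longrightarrow> x i \<ge> 0) \<and> (x0 i < 0 \<longrightarrow> x i \<le> 0) \<and> (x0 i = 0 \<longrightarrow> x i = 0))"

lemma step:
  fixes W :: "'n::finite \<Rightarrow> 'n \<Rightarrow> real"
  assumes m: "m \<ge> 1" and M: "M \<ge> 1" and W: "row_stochastic W"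
    and okx: "ok x0 x" and xo: "x i \<in> opinions m M"
    and zP: "z \<in> P_set (opinions m M) 0 W i x" and nc: "\<not> (z - 0) * (x i - 0) < 0"
  shows "sg x0 i z \<in> P_set (opinions m M) 0 W i (\<lambda>k. sg x0 k (x k))"
    and "\<not> (sg x0 i z - 0) * (sg x0 i (x i) - 0) < 0"
    and "ok x0 (x(i := z))"
proof -
  have zO: "z \<in> opinions m M" and cost: "C_social W i z x \<le> C_social W i (x i) x"
    and zabs: "\<bar>z\<bar> \<le> \<bar>x i\<bar>" using zP unfolding P_set_def by auto
  have wnn: "\<forall>j. W i j \<ge> 0" using W unfolding row_stochastic_def by auto
  have ab: "\<forall>j. real_of_int (sg x0 j (x j)) = real_of_int (x j) \<or>
     (real_of_int (x j) = 0 \<and> (real_of_int (sg x0 j (x j)) = 1 \<or> real_of_int (sg x0 j (x j)) = -1))"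
  proof (intro allI)
    fix j
    have "(x0 j > 0 \<longrightarrow> x j \<ge> 0) \<and> (x0 j < 0 \<longrightarrow> x j \<le> 0) \<and> (x0 j = 0 \<longrightarrow> x j = 0)"
      using okx unfolding ok_def by blast
    then show "real_of_int (sg x0 j (x j)) = real_of_int (x j) \<or>
     (real_of_int (x j) = 0 \<and> (real_of_int (sg x0 j (x j)) = 1 \<or> real_of_int (sg x0 j (x j)) = -1))"
      unfolding sg_def by (cases "x0 j > 0"; cases "x0 j < 0") (auto simp: max_def min_def)
  qed
  have cost': "(\<Sum>j\<in>UNIV. W i j * \<bar>real_of_int z - real_of_int (x j)\<bar>)
      \<le> (\<Sum>j\<in>UNIV. W i j * \<bar>real_of_int (x i) - real_of_int (x j)\<bar>)"
    using cost unfolding C_social_def by simp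
  have xi: "(x0 i > 0 \<longrightarrow> x i \<ge> 0) \<and> (x0 i < 0 \<longrightarrow> x i \<le> 0) \<and> (x0 i = 0 \<longrightarrow> x i = 0)"
    using okx unfolding ok_def by blast
  have zsign: "(x i \<ge> 0 \<longrightarrow> 0 \<le> z \<and> z \<le> x i) \<and> (x i \<le> 0 \<longrightarrow> x i \<le> z \<and> z \<le> 0)"
    using zabs nc by (auto simp: mult_less_0_iff abs_if split: if_splits)
  show "ok x0 (x(i := z))" using okx xi zsign unfolding ok_def by auto
  show "\<not> (sg x0 i z - 0) * (sg x0 i (x i) - 0) < 0"
    using xi zsign unfolding sg_def by (auto simp: mult_less_0_iff)
  show "sg x0 i z \<in> P_set (opinions m M) 0 W i (\<lambda>k. sg x0 k (x k))"
  proof -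
    have inO: "sg x0 i z \<in> opinions m M"
      using zO m M unfolding sg_def opinions_def by auto
    have ab2: "\<bar>sg x0 i z\<bar> \<le> \<bar>sg x0 i (x i)\<bar>"
      using xi zsign unfolding sg_def by auto
    have "C_social W i (sg x0 i z) (\<lambda>k. sg x0 k (x k)) \<le> C_social W i (sg x0 i (x i)) (\<lambda>k. sg x0 k (x k))"
    proof (cases "x0 i > 0")
      case pos: True
      show ?thesis
      proof (cases "x i \<le> 1")
        case True
        then have "sg x0 i z = sg x0 i (x i)" using pos xi zsign unfolding sg_def by auto
        then show ?thesis by simp
      next
        case False
        have sx: "sg x0 i (x i) = x i" using pos False unfolding sg_def by auto
        have sz: "real_of_int (sg x0 i z) = max (real_of_int z) 1" using pos unfolding sg_def by auto
        have "(\<Sum>j\<in>UNIV. W i j * \<bar>max (real_of_int z) 1 - real_of_int (sg x0 j (x j))\<bar>)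
           \<le> (\<Sum>j\<in>UNIV. W i j * \<bar>real_of_int (x i) - real_of_int (sg x0 j (x j))\<bar>)"
          by (rule core[OF wnn _ _ ab cost']) (use False zsign in auto)
        then show ?thesis unfolding C_social_def sx using sz by simp
      qed
    next
      case npos: False
      show ?thesis
      proof (cases "x0 i < 0")
        case neg: True
        show ?thesis
        proof (cases "x i \<ge> -1")
          case True
          then have "sg x0 i z = sg x0 i (x i)" using neg xi zsign unfolding sg_def by auto
          then show ?thesis by simp
        next
          case False
          have sx: "sg x0 i (x i) = x i" using neg False unfolding sg_def by auto
          have sz: "real_of_int (sg x0 i z) = min (real_of_int z) (-1)" using neg unfolding sg_def by auto
          have "(\<Sum>j\<in>UNIV. W i j * \<bar>min (real_of_int z) (-1) - real_of_int (sg x0 j (x j))\<bar>)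
             \<le> (\<Sum>j\<in>UNIV. W i j * \<bar>real_of_int (x i) - real_of_int (sg x0 j (x j))\<bar>)"
            by (rule core_neg[OF wnn _ _ ab cost']) (use False zsign in auto)
          then show ?thesis unfolding C_social_def sx using sz by simp
        qed
      next
        case False
        then have "sg x0 i z = sg x0 i (x i)" using npos xi zsign unfolding sg_def by auto
        then show ?thesis by simp
      qed
    qed
    then show ?thesis using inO ab2 unfolding P_set_def by auto
  qed
qed

lemma main:
  fixes W :: "'n::finite \<Rightarrow> 'n \<Rightarrow> real"
  assumes m: "m \<ge> 1" and M: "M \<ge> 1" and W: "row_stochastic W"
  shows "ok x0 x \<Longrightarrow> (\<forall>i. x i \<in> opinions m M) \<Longrightarrow> legal (opinions m M) 0 W x s \<Longrightarrow> no_crossing 0 x s \<Longrightarrow>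
    legal (opinions m M) 0 W (\<lambda>k. sg x0 k (x k)) (map (\<lambda>(i, z). (i, sg x0 i z)) s)
    \<and> no_crossing 0 (\<lambda>k. sg x0 k (x k)) (map (\<lambda>(i, z). (i, sg x0 i z)) s)
    \<and> run (\<lambda>k. sg x0 k (x k)) (map (\<lambda>(i, z). (i, sg x0 i z)) s) = (\<lambda>k. sg x0 k (run x s k))"
proof (induction s arbitrary: x)
  case Nil
  then show ?case by simp
next
  case (Cons p s)
  obtain i z where p: "p = (i, z)" by (cases p)
  have zP: "z \<in> P_set (opinions m M) 0 W i x" and lg: "legal (opinions m M) 0 W (x(i := z)) s"
    using Cons.prems(3) p by auto
  have nc: "\<not> (z - 0) * (x i - 0) < 0" and nc2: "no_crossing 0 (x(i := z)) s"
    using Cons.prems(4) p by auto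
  have zO: "z \<in> opinions m M" using zP unfolding P_set_def by auto
  have op: "\<forall>k. (x(i := z)) k \<in> opinions m M" using Cons.prems(2) zO by auto
  note st = step[OF m M W Cons.prems(1) _ zP nc, OF Cons.prems(2)[rule_format, of i]]
  have upd: "(\<lambda>k. sg x0 k (x k))(i := sg x0 i z) = (\<lambda>k. sg x0 k ((x(i := z)) k))"
    by (rule ext) simp
  have IH: "legal (opinions m M) 0 W (\<lambda>k. sg x0 k ((x(i := z)) k)) (map (\<lambda>(i, z). (i, sg x0 i z)) s)
    \<and> no_crossing 0 (\<lambda>k. sg x0 k ((x(i := z)) k)) (map (\<lambda>(i, z). (i, sg x0 i z)) s)
    \<and> run (\<lambda>k. sg x0 k ((x(i := z)) k)) (map (\<lambda>(i, z). (i, sg x0 i z)) s) = (\<lambda>k. sg x0 k (run (x(i := z)) s k))"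
    by (rule Cons.IH[OF st(3) op lg nc2])
  show ?case using IH st(1,2) p by (simp add: upd)
qed

lemma legal_take: "legal Os th W x s \<Longrightarrow> legal Os th W x (take t s)"
proof (induction s arbitrary: x t)
  case Nil then show ?case by simp
next
  case (Cons p s) then show ?case by (cases p; cases t) auto
qed

lemma nc_take: "no_crossing th x s \<Longrightarrow> no_crossing th x (take t s)"
proof (induction s arbitrary: x t)
  case Nil then show ?case by simp
next
  case (Cons p s) then show ?case by (cases p; cases t) auto
qed

theorem lemma4:
  fixes m M :: int and W :: "'n::finite \<Rightarrow> 'n \<Rightarrow> real" and x0 :: "'n \<Rightarrow> int"
  assumes "m \<ge> 1" and "M \<ge> 1"
    and "row_stochastic W"
    and "\<forall>i. x0 i \<in> opinions m M"
    and "\<exists>s t. legal (opinions m M) 0 W x0 s \<and> no_crossing 0 x0 s \<and> t \<le> length s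
               \<and> traj x0 s t = (\<lambda>_. 0)"
  shows "\<exists>s t. legal (opinions m M) 0 W x0 s \<and> no_crossing 0 x0 s \<and> t \<le> length s
               \<and> (\<forall>i. x0 i < 0 \<longrightarrow> traj x0 s t i = -1)
               \<and> (\<forall>i. x0 i > 0 \<longrightarrow> traj x0 s t i = 1)"
proof -
  obtain s t where lg: "legal (opinions m M) 0 W x0 s" and nc: "no_crossing 0 x0 s"
    and tr: "traj x0 s t = (\<lambda>_. 0)" using assms(5) by blast
  define s0 where "s0 = take t s"
  have lg0: "legal (opinions m M) 0 W x0 s0" unfolding s0_def by (rule legal_take[OF lg])
  have nc0: "no_crossing 0 x0 s0" unfolding s0_def by (rule nc_take[OF nc])
  have r0: "run x0 s0 = (\<lambda>_. 0)" using tr unfolding traj_def s0_def .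
  have G0: "(\<lambda>k. sg x0 k (x0 k)) = x0" by (rule ext) (simp add: sg_def)
  have ok0: "ok x0 x0" unfolding ok_def by auto
  define s' where "s' = map (\<lambda>(i, z). (i, sg x0 i z)) s0"
  have R: "legal (opinions m M) 0 W x0 s' \<and> no_crossing 0 x0 s' \<and> run x0 s' = (\<lambda>k. sg x0 k (run x0 s0 k))"
    using main[OF assms(1,2,3) ok0 assms(4) lg0 nc0] unfolding G0 s'_def .
  have tr': "traj x0 s' (length s') = (\<lambda>k. sg x0 k 0)"
    using R r0 unfolding traj_def by simp
  show ?thesis
    by (rule exI[of _ s'], rule exI[of _ "length s'"]) (use R tr' in \<open>auto simp: sg_def\<close>)
qed

end
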